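(* Let $d_0<d_1<\cdots$ be the increasing enumeration of $\{m\ge1:\ c_m=0\}$ and $z_n=\left(\frac{d_{4n}+1}{4}-n\right)\bmod 2$ for $n\ge0$. Then the sequence $(z_n)_{n\ge0}$ is not $2$-automatic.
   Context: For $n\in\mathbb{N}$ let $s_2(n)$ be the sum of the binary digits of $n$ and $t_n=s_2(n)\bmod 2$ (the Prouhet–Thue–Morse sequence). Let $F(X)=\sum_{n\ge1}t_nX^n\in\mathbb{F}_2[[X]]$ and let $G(X)=\sum_{n\ge1}c_nX^n\in\mathbb{F}_2[[X]]$ be its compositional inverse, i.e. $F(G(X))=G(F(X))=X$. The $c_n$ are identified with integers in $\{0,1\}$. The sequence $(d_n)$ is indexed from $0$, so $d_0=3$. A sequence $(u_n)$ is $k$-automatic if $u_n$ is the output of a deterministic finite automaton with output reading the base-$k$ expansion of $n$; equivalently its $k$-kernel $\{(u_{k^an+b})_{n}:\ a\ge0,\ 0\le b<k^a\}$ is finite. *)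

theory Defs
  imports "HOL-Computational_Algebra.Formal_Power_Series" "HOL-Library.Z2" "HOL-Library.Infinite_Set"
begin

fun s2 :: "nat \<Rightarrow> nat" where
  "s2 n = (if n = 0 then 0 else n mod 2 + s2 (n div 2))"

definition thue_morse :: "nat \<Rightarrow> bit" where
  "thue_morse n = of_nat (s2 n mod 2)"

definition tmF :: "bit fps" where
  "tmF = Abs_fps (\<lambda>n. if n = 0 then 0 else thue_morse n)"

definition tmG :: "bit fps" where
  "tmG = fps_inv tmF"

definition cseq :: "nat \<Rightarrow> bit" where
  "cseq n = fps_nth tmG n"

definition dseq :: "nat \<Rightarrow> nat" where
  "dseq n = enumerate {m. m \<ge> 1 \<and> cseq m = 0} n"

text \<open>z_n = ((d_{4n}+1)/4 - n) mod 2 (the quotient is an integer).\<close>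
definition zseq :: "nat \<Rightarrow> int" where
  "zseq n = ((int (dseq (4*n)) + 1) div 4 - int n) mod 2"

definition kernel :: "nat \<Rightarrow> (nat \<Rightarrow> 'a) \<Rightarrow> (nat \<Rightarrow> 'a) set" where
  "kernel k u = {(\<lambda>n. u (k ^ a * n + b)) | a b. b < k ^ a}"

definition automatic :: "nat \<Rightarrow> (nat \<Rightarrow> 'a) \<Rightarrow> bool" where
  "automatic k u \<longleftrightarrow> finite (kernel k u)"

end

theory Submission imports Defs "HOL-Library.Disjoint_Sets" begin

lemma bit_add_self[simp]: "(a::bit) + a = 0" by simp
lemma bit_mult_self[simp]: "(a::bit) * a = a" by (cases a) auto

lemma bit_cases: "(x::bit) = 0 \<or> x = 1" by (cases x) auto

lemma frob: fixes f :: "bit fps"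
  shows "fps_nth (f^2) n = (if even n then fps_nth f (n div 2) else 0)"
proof -
  have e: "fps_nth (f^2) n = (\<Sum>i=0..n. fps_nth f i * fps_nth f (n-i))" by (simp add: power2_eq_square fps_mult_nth)
  let ?X = "{0..n} - {i. 2*i = n}"
  have z: "(\<Sum>i\<in>?X. fps_nth f i * fps_nth f (n-i)) = 0"
  proof (rule sum_involution_eq_0[where h="\<lambda>i. n - i"])
    fix x assume x: "x \<in> ?X"
    then have "n - (n - x) = x" by auto
    then have "fps_nth f (n - x) * fps_nth f (n - (n - x)) = fps_nth f x * fps_nth f (n - x)"
      by (simp only: mult.commute)
    then show "fps_nth f (n - x) * fps_nth f (n - (n - x)) + fps_nth f x * fps_nth f (n - x) = 0"
      by (simp only: bit_add_self)
  qed auto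
  show ?thesis
  proof (cases "even n")
    case True
    then obtain m where m: "n = 2*m" by blast
    have eqs: "{0..n} = insert m ?X" using m by auto
    have fin: "finite ?X" by simp
    have nm: "m \<notin> ?X" using m by simp
    have "(\<Sum>i=0..n. fps_nth f i * fps_nth f (n-i)) = (\<Sum>i\<in>insert m ?X. fps_nth f i * fps_nth f (n-i))"
      using eqs by (rule arg_cong)
    also have "\<dots> = fps_nth f m * fps_nth f (n-m) + (\<Sum>i\<in>?X. fps_nth f i * fps_nth f (n-i))"
      by (rule sum.insert[OF fin nm])
    also have "\<dots> = fps_nth f m" 
    proof -
      have "n - m = m" using m by simp
      then show ?thesis using z by (simp only: bit_mult_self add_0_right)
    qed
    finally show ?thesis using e True m by simp
  next
    case False
    then have "{0..n} = ?X" by auto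
    then have "(\<Sum>i=0..n. fps_nth f i * fps_nth f (n-i)) = (\<Sum>i\<in>?X. fps_nth f i * fps_nth f (n-i))"
      by (rule arg_cong)
    then show ?thesis using e z False by (simp only: if_False)
  qed
qed

declare s2.simps[simp del]

lemma s2_0: "s2 0 = 0" by (subst s2.simps) simp

lemma s2_double: "s2 (2*m) = s2 m"
proof (cases "m = 0")
  case True then show ?thesis by simp
next
  case False
  then have "s2 (2*m) = (2*m) mod 2 + s2 ((2*m) div 2)" by (subst s2.simps) simp
  then show ?thesis by simp
qed

lemma s2_double1: "s2 (2*m+1) = s2 m + 1"
proof -
  have "s2 (2*m+1) = (2*m+1) mod 2 + s2 ((2*m+1) div 2)" by (subst s2.simps) simp
  then show ?thesis by simp
qed

lemma of_nat_bit: "(of_nat k::bit) = (if even k then 0 else 1)"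
  by (induct k) auto

lemma tm0: "thue_morse 0 = 0" by (simp add: thue_morse_def s2_0)
lemma tm_double: "thue_morse (2*m) = thue_morse m"
  by (simp only: thue_morse_def s2_double)

lemma tm_double1: "thue_morse (2*m+1) = 1 + thue_morse m"
  unfolding thue_morse_def s2_double1 of_nat_bit by auto

lemma tmF_nth: "fps_nth tmF n = thue_morse n"
  by (simp add: tmF_def tm0)

lemma mult4_nth: "fps_nth ((1 + fps_X + fps_X^2 + fps_X^3) * (g::bit fps)) n =
   fps_nth g n + (if n < 1 then 0 else fps_nth g (n-1)) + (if n < 2 then 0 else fps_nth g (n-2))
   + (if n < 3 then 0 else fps_nth g (n-3))"
  using fps_X_power_mult_nth[of 1 g n] fps_X_power_mult_nth[of 2 g n] fps_X_power_mult_nth[of 3 g n]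
  by (simp only: distrib_right fps_add_nth mult_1 power_one_right)

lemma mult2_nth: "fps_nth ((1 + fps_X^2) * (g::bit fps)) n =
   fps_nth g n + (if n < 2 then 0 else fps_nth g (n-2))"
  using fps_X_power_mult_nth[of 2 g n]
  by (simp only: distrib_right fps_add_nth mult_1)

lemma tm_pt: "thue_morse n + (if n < 2 then 0 else thue_morse (n-2)) =
  (if even n then thue_morse (n div 2) else 0)
  + (if n < 1 then 0 else (if even (n-1) then thue_morse ((n-1) div 2) else 0))
  + (if n < 2 then 0 else (if even (n-2) then thue_morse ((n-2) div 2) else 0))
  + (if n < 3 then 0 else (if even (n-3) then thue_morse ((n-3) div 2) else 0))
  + (if n = 1 then 1 else 0)"
proof -
    have "n = 0 \<or> n = 1 \<or> (\<exists>m. n = 2*m+2) \<or> (\<exists>m. n = 2*m+3)" by presburger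
    then show "?thesis"
    proof (elim disjE exE)
      fix m assume n: "n = 2*m+2"
      have t1: "thue_morse n = thue_morse (m+1)" using tm_double[of "Suc m"] n by simp
      have t2: "thue_morse (n-2) = thue_morse m" using tm_double[of m] n by simp
      have h: "even n" "n div 2 = m+1" "odd (n-1)" "\<not> n < 1" "\<not> n < 2" "n \<noteq> 1" "even (n-2)" "(n-2) div 2 = m"
        using n by auto
      have h3: "(if n < 3 then 0 else (if even (n-3) then thue_morse ((n-3) div 2) else 0)) = (0::bit)"
        using n by auto
      show ?thesis by (simp only: t1 t2 h h3 if_True if_False) simp
    next
      fix m assume n: "n = 2*m+3"
      have e1: "n = 2*(m+1)+1" using n by simp
      have e2: "n - 2 = 2*m+1" using n by simp
      have t1: "thue_morse n = 1 + thue_morse (m+1)" unfolding e1 by (rule tm_double1)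
      have t2: "thue_morse (n-2) = 1 + thue_morse m" unfolding e2 by (rule tm_double1)
      have h: "odd n" "(n-1) div 2 = m+1" "even (n-1)" "\<not> n < 1" "\<not> n < 2" "\<not> n < 3" "n \<noteq> 1" "odd (n-2)" "even (n-3)" "(n-3) div 2 = m"
        using n by auto
      show ?thesis using bit_cases[of "thue_morse (Suc m)"] bit_cases[of "thue_morse m"]
        by (simp only: t1 t2 h if_True if_False) auto
    next
      assume n: "n = 0"
      show ?thesis unfolding n by (simp add: tm0)
    next
      assume n: "n = 1"
      have "thue_morse 1 = 1" using tm_double1[of 0] by (simp add: tm0)
      then show ?thesis unfolding n by (simp add: tm0)
    qed
qed


lemma tmF_eq: "tmF * (1 + fps_X^2) = (1 + fps_X + fps_X^2 + fps_X^3) * tmF^2 + fps_X"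
proof (rule fps_ext)
  fix n
  have l: "fps_nth (tmF * (1 + fps_X^2)) n = thue_morse n + (if n < 2 then 0 else thue_morse (n-2))"
    by (simp only: mult.commute[of tmF] mult2_nth tmF_nth)
  have r: "fps_nth ((1 + fps_X + fps_X^2 + fps_X^3) * tmF^2 + fps_X) n = 
  (if even n then thue_morse (n div 2) else 0)
  + (if n < 1 then 0 else (if even (n-1) then thue_morse ((n-1) div 2) else 0))
  + (if n < 2 then 0 else (if even (n-2) then thue_morse ((n-2) div 2) else 0))
  + (if n < 3 then 0 else (if even (n-3) then thue_morse ((n-3) div 2) else 0))
  + (if n = 1 then 1 else 0)"
    by (simp only: fps_add_nth mult4_nth frob tmF_nth fps_X_nth)
  show "fps_nth (tmF * (1 + fps_X^2)) n = fps_nth ((1 + fps_X + fps_X^2 + fps_X^3) * tmF^2 + fps_X) n"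
    unfolding l r by (rule tm_pt)
qed

fun inS :: "nat \<Rightarrow> bool" where
  "inS m = (if m = 0 then True else m mod 4 \<le> 1 \<and> inS (m div 4))"
declare inS.simps[simp del]

lemma inS_0[simp]: "inS 0" by (subst inS.simps) simp

lemma inS_step: "inS m \<longleftrightarrow> (m = 0 \<or> (m mod 4 \<le> 1 \<and> inS (m div 4)))"
  by (subst inS.simps) auto

lemma inS_4: assumes "r < 4" shows "inS (4*q + r) \<longleftrightarrow> (r \<le> 1 \<and> inS q)"
proof -
  have a: "(4*q+r) mod 4 = r" "(4*q+r) div 4 = q" using assms by auto
  show ?thesis
  proof (cases "4*q+r = 0")
    case True then have "q = 0" "r = 0" by auto
    then show ?thesis by simp
  next
    case False
    then show ?thesis using inS_step[of "4*q+r"] a by auto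
  qed
qed

lemma dm4: "(4*q + r mod 4) div 4 = (q::nat)" "(4*q + r mod 4) mod 4 = (r::nat) mod 4" by simp_all

definition hfun :: "nat \<Rightarrow> bool" where
  "hfun n = (n mod 8 = 0 \<and> inS (n div 8))"

lemma h_pt: "hfun n = ((n mod 4 = 0 \<and> hfun (n div 4)) \<noteq> (8 \<le> n \<and> (n-8) mod 4 = 0 \<and> hfun ((n-8) div 4)))"
proof -
  obtain b j r where n: "n = 32*b + 8*j + r" and j: "j < 4" and r: "r < 8"
  proof -
    have e1: "n = 32*(n div 32) + n mod 32" by simp
    have e2: "n mod 32 = 8*((n mod 32) div 8) + (n mod 32) mod 8" by simp
    have e3: "(n mod 32) mod 8 = n mod 8" by (rule mod_mod_cancel) simp
    have "n = 32*(n div 32) + 8*((n mod 32) div 8) + n mod 8" using e1 e2 e3 by linarith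
    moreover have "(n mod 32) div 8 < 4" "n mod 8 < 8" by auto
    ultimately show ?thesis using that by blast
  qed
  have hf: "\<And>q c. hfun (8*q + c) \<longleftrightarrow> (c mod 8 = 0 \<and> inS (q + c div 8))"
    unfolding hfun_def by simp
  have A: "hfun n \<longleftrightarrow> (r = 0 \<and> j \<le> 1 \<and> inS b)"
  proof -
    have "n = 8*(4*b+j) + r" using n by simp
    then have "hfun n \<longleftrightarrow> (r = 0 \<and> inS (4*b+j))" using hf[of "4*b+j" r] r by simp
    then show ?thesis using inS_4[OF j, of b] by simp
  qed
  have B: "(n mod 4 = 0 \<and> hfun (n div 4)) \<longleftrightarrow> (r = 0 \<and> j = 0 \<and> inS b)"
  proof -
    have "n div 4 = 8*b + (2*j + r div 4)" using n by presburger
    moreover have "n mod 4 = r mod 4" using n by presburger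
    ultimately have "(n mod 4 = 0 \<and> hfun (n div 4)) \<longleftrightarrow> (r mod 4 = 0 \<and> (2*j + r div 4) mod 8 = 0 \<and> inS (b + (2*j + r div 4) div 8))"
      using hf[of b "2*j + r div 4"] by (simp only:)
    moreover have "(r mod 4 = 0 \<and> (2*j + r div 4) mod 8 = 0) \<longleftrightarrow> (r = 0 \<and> j = 0)"
      using j r by presburger
    moreover have "(2*j + r div 4) div 8 = 0"
    proof -
      have "r div 4 < 2" using r by (simp add: div_less_iff_less_mult)
      then have "2*j + r div 4 < 8" using j by linarith
      then show ?thesis by simp
    qed
    ultimately show ?thesis by (simp only: add_0_right) (smt (verit))
  qed
  have C: "(8 \<le> n \<and> (n-8) mod 4 = 0 \<and> hfun ((n-8) div 4)) \<longleftrightarrow> (r = 0 \<and> j = 1 \<and> inS b)"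
  proof (cases "j = 0")
    case True
    show ?thesis
    proof (cases "b = 0")
      case True
      then have "n < 8" using n r \<open>j = 0\<close> by simp
      then show ?thesis using \<open>j = 0\<close> by simp
    next
      case False
      have e: "n - 8 = 4*(8*(b-1) + (6 + r div 4)) + r mod 4" using n \<open>j = 0\<close> False by simp
      then have "(n-8) div 4 = 8*(b-1) + (6 + r div 4)" by (simp only: dm4)
      moreover have "(6 + r div 4) mod 8 \<noteq> 0"
      proof -
        have "r div 4 < 2" using r by (simp add: div_less_iff_less_mult)
        then show ?thesis by (cases "r div 4") auto
      qed
      ultimately have "\<not> hfun ((n-8) div 4)" using hf[of "b-1" "6 + r div 4"] by simp
      then show ?thesis using \<open>j = 0\<close> by simp
    qed
  next
    case False
    have e: "n - 8 = 4*(8*b + (2*(j-1) + r div 4)) + r mod 4" using n False by simp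
    then have d: "(n-8) div 4 = 8*b + (2*(j-1) + r div 4)" and m: "(n-8) mod 4 = r mod 4" by (simp_all only: dm4)
    have ge: "8 \<le> n" using n False by simp
    have lt: "2*(j-1) + r div 4 < 8"
    proof -
      have "r div 4 < 2" using r by (simp add: div_less_iff_less_mult)
      then show ?thesis using j by linarith
    qed
    then have "hfun ((n-8) div 4) \<longleftrightarrow> (2*(j-1) + r div 4 = 0 \<and> inS b)"
      using hf[of b "2*(j-1) + r div 4"] d by simp
    moreover have "(r mod 4 = 0 \<and> 2*(j-1) + r div 4 = 0) \<longleftrightarrow> (r = 0 \<and> j = 1)"
    proof
      assume a: "r mod 4 = 0 \<and> 2*(j-1) + r div 4 = 0"
      then have "r div 4 = 0" "j - 1 = 0" by auto
      then have "r < 4" "j = 1" using False by auto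
      then show "r = 0 \<and> j = 1" using a by simp
    qed simp
    ultimately show ?thesis using ge m by (smt (verit))
  qed
  show ?thesis using A B C by auto
qed

lemma ob_add: "(of_bool a + of_bool b :: bit) = of_bool (a \<noteq> b)" by (cases a; cases b) auto
lemma if_ob: "(if P then (of_bool Q::bit) else 0) = of_bool (P \<and> Q)" by simp
lemma if_ob2: "(if P then 0 else (of_bool Q::bit)) = of_bool (\<not>P \<and> Q)" by simp

definition Hfps :: "bit fps" where "Hfps = Abs_fps (\<lambda>n. of_bool (hfun n))"

lemma Hnth: "fps_nth Hfps n = of_bool (hfun n)" by (simp add: Hfps_def)

lemma H4_nth: "fps_nth (Hfps^4) n = of_bool (n mod 4 = 0 \<and> hfun (n div 4))"
proof -
  have "Hfps^4 = (Hfps^2)^2" by (simp flip: power_mult)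
  then have "fps_nth (Hfps^4) n = (if even n then (if even (n div 2) then fps_nth Hfps (n div 2 div 2) else 0) else 0)"
    by (simp only: frob)
  moreover have "(even n \<and> even (n div 2)) \<longleftrightarrow> n mod 4 = 0" by presburger
  moreover have "n div 2 div 2 = n div 4" by (simp add: div_mult2_eq)
  ultimately show ?thesis by (auto simp: Hnth)
qed

lemma mult8_nth: "fps_nth ((1 + fps_X^8) * (g::bit fps)) n =
   fps_nth g n + (if n < 8 then 0 else fps_nth g (n-8))"
  using fps_X_power_mult_nth[of 8 g n]
  by (simp only: distrib_right fps_add_nth mult_1)

lemma H_eq: "Hfps = (1 + fps_X^8) * Hfps^4"
proof (rule fps_ext)
  fix n
  have "fps_nth ((1 + fps_X^8) * Hfps^4) n = of_bool (n mod 4 = 0 \<and> hfun (n div 4)) + of_bool (\<not> n < 8 \<and> ((n-8) mod 4 = 0 \<and> hfun ((n-8) div 4)))"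
    by (simp only: mult8_nth H4_nth if_ob2)
  also have "\<dots> = of_bool (hfun n)" unfolding ob_add using h_pt[of n] by (simp add: not_less)
  finally show "fps_nth Hfps n = fps_nth ((1 + fps_X^8) * Hfps^4) n" by (simp add: Hnth)
qed

lemma H_ne0: "Hfps \<noteq> 0"
proof
  assume "Hfps = 0"
  then have "fps_nth Hfps 0 = 0" by simp
  moreover have "hfun 0" by (simp add: hfun_def)
  ultimately show False by (simp add: Hnth)
qed

lemma H3: "Hfps^3 * (1 + fps_X^8) = 1"
proof -
  have h4: "Hfps^4 = Hfps * Hfps^3" by (simp add: eval_nat_numeral)
  have e: "(1 + fps_X^8) * Hfps^4 = Hfps * (Hfps^3 * (1 + fps_X^8))" unfolding h4 by (simp only: mult_ac)
  have "Hfps * 1 = Hfps * (Hfps^3 * (1 + fps_X^8))"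
    by (rule trans[OF trans[OF mult_1_right H_eq] e])
  then have "1 = Hfps^3 * (1 + fps_X^8)" using mult_left_cancel[OF H_ne0] by blast
  then show ?thesis by simp
qed

definition cexp :: "nat \<Rightarrow> bool" where
  "cexp n = (1 \<le> n \<and> (n+1) mod 8 < 4 \<and> inS ((n+1) div 8))"

definition Gexp :: "bit fps" where "Gexp = Abs_fps (\<lambda>n. of_bool (cexp n))"

lemma Gnth: "fps_nth Gexp n = of_bool (cexp n)" by (simp add: Gexp_def)

lemma hk: assumes n: "n = 8*a + r" and r: "r < 8" and k: "k < 4"
  shows "(k \<le> n \<and> hfun (n-k)) \<longleftrightarrow> (r = k \<and> inS a)"
proof (cases "k \<le> r")
  case True
  then have "n - k = 8*a + (r-k)" using n by simp
  moreover have "(r-k) mod 8 = r - k" "(r-k) div 8 = 0" using r by auto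
  ultimately have "hfun (n-k) \<longleftrightarrow> (r - k = 0 \<and> inS a)" unfolding hfun_def by simp
  then show ?thesis using True n by auto
next
  case False
  show ?thesis
  proof (cases "a = 0")
    case True
    then show ?thesis using False n by auto
  next
    case a: False
    define c where "c = 8 + r - k"
    have nc: "n - k = 8*(a-1) + c" using n False k a unfolding c_def by simp
    have cm: "c mod 8 \<noteq> 0" using False k r unfolding c_def by simp
    have "(n-k) mod 8 = c mod 8" unfolding nc by simp
    then have "\<not> hfun (n-k)" unfolding hfun_def using cm by simp
    then show ?thesis using False by auto
  qed
qed

lemma c_pt: "of_bool (1 \<le> n \<and> cexp (n-1)) = of_bool (hfun n) + of_bool (\<not> n<1 \<and> hfun (n-1))
  + of_bool (\<not> n<2 \<and> hfun (n-2)) + of_bool (\<not> n<3 \<and> hfun (n-3)) + of_bool (n=0) + (of_bool (n = 1)::bit)"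
proof -
  define a where "a = n div 8"
  define r where "r = n mod 8"
  have n: "n = 8*a + r" and r: "r < 8" unfolding a_def r_def by auto
  have k0: "hfun n \<longleftrightarrow> (r = 0 \<and> inS a)" using hk[OF n r, of 0] by simp
  have k1: "(\<not> n<1 \<and> hfun (n-1)) \<longleftrightarrow> (r = 1 \<and> inS a)" using hk[OF n r, of 1] by (simp add: not_less Suc_le_eq)
  have k2: "(\<not> n<2 \<and> hfun (n-2)) \<longleftrightarrow> (r = 2 \<and> inS a)" using hk[OF n r, of 2] by (simp add: not_less)
  have k3: "(\<not> n<3 \<and> hfun (n-3)) \<longleftrightarrow> (r = 3 \<and> inS a)" using hk[OF n r, of 3] by (simp add: not_less)
  have cc: "(1 \<le> n \<and> cexp (n-1)) \<longleftrightarrow> (2 \<le> n \<and> r < 4 \<and> inS a)"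
  proof (cases "1 \<le> n")
    case True
    then have "n - 1 + 1 = n" by simp
    then show ?thesis unfolding cexp_def a_def r_def using True by auto
  qed simp
  have z0: "n = 0 \<longleftrightarrow> (a = 0 \<and> r = 0)" using n by presburger
  have z1: "n = 1 \<longleftrightarrow> (a = 0 \<and> r = 1)" using n by presburger
  have z2: "2 \<le> n \<longleftrightarrow> \<not>(a = 0 \<and> r \<le> 1)" using n by presburger
  show ?thesis unfolding ob_add k0 k1 k2 k3 cc z0 z1 z2
    by (cases "a = 0") auto
qed

lemma G_eq: "fps_X * Gexp = Hfps * (1 + fps_X + fps_X^2 + fps_X^3) + 1 + fps_X"
proof (rule fps_ext)
  fix n
  have l: "fps_nth (fps_X * Gexp) n = of_bool (1 \<le> n \<and> cexp (n-1))"
    by (simp add: Gnth)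
  have r: "fps_nth (Hfps * (1 + fps_X + fps_X^2 + fps_X^3) + 1 + fps_X) n =
    of_bool (hfun n) + of_bool (\<not> n<1 \<and> hfun (n-1))
  + of_bool (\<not> n<2 \<and> hfun (n-2)) + of_bool (\<not> n<3 \<and> hfun (n-3)) + of_bool (n=0) + (of_bool (n = 1)::bit)"
    by (simp only: fps_add_nth mult.commute[of Hfps] mult4_nth Hnth if_ob2 fps_one_nth fps_X_nth) simp
  show "fps_nth (fps_X * Gexp) n = fps_nth (Hfps * (1 + fps_X + fps_X^2 + fps_X^3) + 1 + fps_X) n"
    unfolding l r by (rule c_pt)
qed

lemma key: fixes X G H :: "'a::idom" assumes two: "(2::'a) = 0"
  and e1: "X*G = H*(1+X+X^2+X^3) + 1 + X" and e2: "H^3*(1+X^8) = 1"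
  shows "X^3 * (X*(1+G^2) - ((1+G+G^2+G^3)*X^2 + G)) = 0"
proof -
  define u where "u = 1 + X"
  define W where "W = X*G"
  have t2: "\<And>y::'a. 2*y = 0" using two by simp
  have s1: "1+X+X^2+X^3 = u^3 - 2*(X+X^2)" unfolding u_def by algebra
  then have s1': "1+X+X^2+X^3 = u^3" using t2 by simp
  have Wd: "W = H*u^3 + u" unfolding W_def using e1 unfolding s1' u_def by (simp add: add.assoc)
  have g0: "X^3 * (X*(1+G^2) - ((1+G+G^2+G^3)*X^2 + G)) = X^2*(X^2*u + W*u^2 + W^2*u + W^3) - 2*(X^5 + X^4*W + X^3*W^2 + X^2*W^3 + X^2*W + X^3*W)"
    unfolding u_def W_def by algebra
  define b where "b = H*u^2"
  have Wb: "W = u*(b+1)" using Wd unfolding b_def by algebra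
  have T1: "X^2*u + W*u^2 + W^2*u + W^3 = u*(X^2 + u^2*(b^3+1)) + 2*(u^3*(2*b^2+3*b+1))"
    unfolding Wb by algebra
  have X2: "X^2 = u^2 + 1 - 2*(X+1)" unfolding u_def by algebra
  have u8: "u^8 = 1 + X^8 + 2*(4*X + 14*X^2 + 28*X^3 + 35*X^4 + 28*X^5 + 14*X^6 + 4*X^7)"
    unfolding u_def by algebra
  have hb: "u^2*b^3 = 1 + 2*(H^3*(4*X + 14*X^2 + 28*X^3 + 35*X^4 + 28*X^5 + 14*X^6 + 4*X^7))"
  proof -
    have "u^2*b^3 = H^3*u^8" unfolding b_def by algebra
    also have "\<dots> = H^3*(1+X^8) + 2*(H^3*(4*X + 14*X^2 + 28*X^3 + 35*X^4 + 28*X^5 + 14*X^6 + 4*X^7))"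
      unfolding u8 by algebra
    finally show ?thesis using e2 by simp
  qed
  have "X^2 + u^2*(b^3+1) = 2*(1 + u^2 - (X+1) + H^3*(4*X + 14*X^2 + 28*X^3 + 35*X^4 + 28*X^5 + 14*X^6 + 4*X^7))"
    using X2 hb by algebra
  then have "X^2 + u^2*(b^3+1) = 0" using t2 by simp
  then have "X^2*u + W*u^2 + W^2*u + W^3 = 0" using T1 t2 by simp
  then show ?thesis using g0 t2 by simp
qed

lemma two_fps: "(2::bit fps) = 0"
proof (rule fps_ext)
  fix n show "fps_nth (2::bit fps) n = fps_nth 0 n" by (simp add: fps_numeral_nth)
qed

lemma G0: "fps_nth Gexp 0 = 0" by (simp add: Gnth cexp_def)

lemma X_ne0: "(fps_X :: bit fps) \<noteq> 0"
proof
  assume "(fps_X :: bit fps) = 0"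
  then have "fps_nth (fps_X :: bit fps) 1 = 0" by simp
  then show False by simp
qed

lemma G_cubic: "fps_X*(1+Gexp^2) = (1+Gexp+Gexp^2+Gexp^3)*fps_X^2 + Gexp"
proof -
  have "fps_X^3 * (fps_X*(1+Gexp^2) - ((1+Gexp+Gexp^2+Gexp^3)*fps_X^2 + Gexp)) = 0"
    by (rule key[OF two_fps G_eq H3])
  moreover have "(fps_X::bit fps)^3 \<noteq> 0" using X_ne0 by simp
  ultimately show ?thesis by simp
qed

lemma compose_eq: "tmF oo Gexp = fps_X"
proof -
  define Y where "Y = tmF oo Gexp"
  have "(tmF * (1 + fps_X^2)) oo Gexp = ((1 + fps_X + fps_X^2 + fps_X^3) * tmF^2 + fps_X) oo Gexp"
    using tmF_eq by simp
  then have eY: "Y * (1 + Gexp^2) = (1 + Gexp + Gexp^2 + Gexp^3) * Y^2 + Gexp"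
    unfolding Y_def
    by (simp add: fps_compose_mult_distrib[OF G0] fps_compose_add_distrib fps_X_power_compose[OF G0]
         fps_X_fps_compose_startby0[OF G0] fps_compose_power[OF G0, symmetric])
  have "(Y - fps_X) * ((1 + Gexp^2) - (1 + Gexp + Gexp^2 + Gexp^3) * (Y + fps_X)) = 0"
    using eY G_cubic by algebra
  moreover have "fps_nth ((1 + Gexp^2) - (1 + Gexp + Gexp^2 + Gexp^3) * (Y + fps_X)) 0 = 1"
  proof -
    have "fps_nth Y 0 = 0" unfolding Y_def by (simp add: tmF_nth tm0)
    then show ?thesis using G0 by simp
  qed
  ultimately have "Y - fps_X = 0" by (metis mult_eq_0_iff fps_zero_nth zero_neq_one)
  then show ?thesis unfolding Y_def by simp
qed

lemma tmF1: "fps_nth tmF 1 = 1"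
proof -
  have "thue_morse 1 = 1" using tm_double1[of 0] by (simp add: tm0)
  then show ?thesis by (simp only: tmF_nth)
qed

lemma tmG_eq: "tmG = Gexp"
proof -
  have a0: "fps_nth tmF 0 = 0" by (simp add: tmF_nth tm0)
  have a1: "fps_nth tmF 1 \<noteq> 0" unfolding tmF1 by simp
  have "tmG = tmG oo fps_X" by simp
  also have "\<dots> = fps_inv tmF oo (tmF oo Gexp)" unfolding tmG_def compose_eq ..
  also have "\<dots> = (fps_inv tmF oo tmF) oo Gexp" by (rule fps_compose_assoc[OF G0 a0])
  also have "\<dots> = Gexp" unfolding fps_inv[OF a0 a1] by (rule fps_X_fps_compose_startby0[OF G0])
  finally show ?thesis .
qed

lemma cseq_eq: "cseq n = of_bool (cexp n)"
  unfolding cseq_def tmG_eq Gnth ..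


fun sf :: "nat \<Rightarrow> nat" where
  "sf n = (if n = 0 then 0 else 4 * sf (n div 2) + n mod 2)"
declare sf.simps[simp del]
lemma sf_0[simp]: "sf 0 = 0" by (simp add: sf.simps)

lemma sf_2: assumes "e < 2" shows "sf (2*j + e) = 4 * sf j + e"
proof (cases "2*j + e = 0")
  case True then have "j = 0" "e = 0" by auto
  then show ?thesis by (simp add: sf.simps)
next
  case False
  have "(2*j+e) div 2 = j" "(2*j+e) mod 2 = e" using assms by auto
  then show ?thesis using False by (subst sf.simps) simp
qed


lemma sf_inS: "inS (sf i)"
proof (induction i rule: less_induct)
  case (less i)
  show ?case
  proof (cases "i = 0")
    case True then show ?thesis by simp
  next
    case False
    have e: "i = 2*(i div 2) + i mod 2" by simp
    have "sf i = 4 * sf (i div 2) + i mod 2" using sf_2[of "i mod 2" "i div 2"] e by simp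
    moreover have "inS (sf (i div 2))" using less False by simp
    ultimately show ?thesis using inS_4[of "i mod 2" "sf (i div 2)"] by simp
  qed
qed

lemma inS_sf: "inS m \<Longrightarrow> \<exists>i. m = sf i"
proof (induction m rule: less_induct)
  case (less m)
  show ?case
  proof (cases "m = 0")
    case True then show ?thesis by (intro exI[of _ 0]) simp
  next
    case False
    then have h: "m mod 4 \<le> 1" "inS (m div 4)" using less.prems inS_step[of m] by auto
    have "m div 4 < m" using False by simp
    then obtain j where j: "m div 4 = sf j" using less.IH h(2) by blast
    have "m = 4 * (m div 4) + m mod 4" by simp
    then have "m = 4 * sf j + m mod 4" unfolding j .
    also have "\<dots> = sf (2*j + m mod 4)" using sf_2[of "m mod 4" j] h by simp
    finally show ?thesis by blast
  qed
qed

lemma sf_step: "sf i < sf (Suc i)"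
proof (induction i rule: less_induct)
  case (less i)
  obtain j e where i: "i = 2*j + e" and e: "e < 2" using div_mod_decomp[of i 2] by (metis mod_less_divisor zero_less_numeral add.commute mult.commute)
  show ?case
  proof (cases "e = 0")
    case True
    then have "sf i = 4 * sf j" "sf (Suc i) = 4 * sf j + 1" using sf_2[of 0 j] sf_2[of 1 j] i by simp_all
    then show ?thesis by simp
  next
    case False
    then have e1: "e = 1" using e by simp
    have "j < i" using i e1 by simp
    then have "sf j < sf (Suc j)" using less.IH by simp
    moreover have "sf i = 4 * sf j + 1" using sf_2[of 1 j] i e1 by simp
    moreover have "sf (Suc i) = 4 * sf (Suc j)" using sf_2[of 0 "Suc j"] i e1 by simp
    ultimately show ?thesis by simp
  qed
qed

lemma sf_mono: "strict_mono sf"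
  using sf_step by (simp add: strict_mono_Suc_iff)

lemma sf_ge: "i \<le> sf i"
  using sf_mono by (simp add: strict_mono_imp_increasing)

lemma sf_pow: "sf (2^j) = 4^j"
proof (induction j)
  case 0 then show ?case using sf_2[of 1 0] by simp
next
  case (Suc j)
  then show ?case using sf_2[of 0 "2^j"] by simp
qed

lemma sf_pow1: "3 * sf (2^j - 1) + 1 = 4^j"
proof (induction j)
  case 0 then show ?case by simp
next
  case (Suc j)
  have "(2::nat)^Suc j - 1 = 2*(2^j - 1) + 1" by (induction j) auto
  then have "sf (2^Suc j - 1) = 4 * sf (2^j - 1) + 1" using sf_2[of 1 "2^j - 1"] by simp
  then show ?case using Suc by simp
qed


lemma card_less_enum: assumes inf: "infinite (A::nat set)" shows "card {y\<in>A. y < enumerate A n} = n"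
proof -
  have "{y\<in>A. y < enumerate A n} = enumerate A ` {..<n}"
  proof
    show "{y\<in>A. y < enumerate A n} \<subseteq> enumerate A ` {..<n}"
    proof
      fix y assume y: "y \<in> {y\<in>A. y < enumerate A n}"
      then obtain m where m: "enumerate A m = y" using enumerate_Ex[OF inf] by blast
      then have "m < n" using y enumerate_mono_iff[OF inf] by auto
      then show "y \<in> enumerate A ` {..<n}" using m by auto
    qed
    show "enumerate A ` {..<n} \<subseteq> {y\<in>A. y < enumerate A n}"
      using enumerate_in_set[OF inf] enumerate_mono[OF _ inf] by auto
  qed
  moreover have "inj_on (enumerate A) {..<n}" using inj_enumerate[OF inf] by (simp add: inj_on_def)
  ultimately show ?thesis by (simp add: card_image)
qed

lemma enum_card: assumes inf: "infinite (A::nat set)" and x: "x \<in> A" and c: "card {y\<in>A. y < x} = n"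
  shows "enumerate A n = x"
proof -
  obtain m where m: "enumerate A m = x" using enumerate_Ex[OF inf x] by blast
  then have "card {y\<in>A. y < x} = m" using card_less_enum[OF inf, of m] by simp
  then show ?thesis using c m by simp
qed

definition Kset :: "nat set" where "Kset = {k. \<not> (even k \<and> inS (k div 2))}"
definition Dset :: "nat set" where "Dset = {m. 1 \<le> m \<and> cseq m = 0}"

lemma K0: "0 \<notin> Kset" by (simp add: Kset_def)

lemma D_iff: "m \<in> Dset \<longleftrightarrow> (m+1) div 4 \<in> Kset"
proof (cases "m = 0")
  case True then show ?thesis by (simp add: Dset_def Kset_def)
next
  case False
  have a: "even ((m+1) div 4) \<longleftrightarrow> (m+1) mod 8 < 4" by presburger
  have b: "(m+1) div 4 div 2 = (m+1) div 8" by (simp add: div_mult2_eq)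
  have "m \<in> Dset \<longleftrightarrow> \<not> cexp m" using False by (simp add: Dset_def cseq_eq)
  also have "\<dots> \<longleftrightarrow> (m+1) div 4 \<in> Kset" unfolding cexp_def Kset_def using False a b by simp
  finally show ?thesis .
qed

lemma K_inf: "infinite Kset"
  unfolding infinite_nat_iff_unbounded
proof
  fix m show "\<exists>n>m. n \<in> Kset" by (intro exI[of _ "2*m+1"]) (simp add: Kset_def)
qed

lemma D_inf: "infinite Dset"
  unfolding infinite_nat_iff_unbounded
proof
  fix m :: nat
  have "(8*m+3+1) div 4 = 2*m+1" by simp
  then have "8*m+3 \<in> Dset" unfolding D_iff by (simp add: Kset_def)
  then show "\<exists>n>m. n \<in> Dset" by (intro exI[of _ "8*m+3"]) simp
qed

lemma D_count: assumes k: "k \<in> Kset"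
  shows "card {y\<in>Dset. y < 4*k - 1} = card {k'\<in>Kset. k' < k} * 4"
proof -
  have k1: "1 \<le> k" using k K0 by (cases k) auto
  have "bij_betw (\<lambda>y. ((y+1) div 4, (y+1) mod 4)) {y\<in>Dset. y < 4*k - 1} ({k'\<in>Kset. k' < k} \<times> {..<(4::nat)})"
  proof (rule bij_betw_byWitness[where f'="\<lambda>(a,r). 4*a + r - 1"])
    show "\<forall>y\<in>{y\<in>Dset. y < 4*k - 1}. (\<lambda>(a,r). 4*a + r - 1) ((y+1) div 4, (y+1) mod 4) = y"
      by simp
    show "\<forall>p\<in>{k'\<in>Kset. k' < k} \<times> {..<(4::nat)}. (\<lambda>y. ((y+1) div 4, (y+1) mod 4)) ((\<lambda>(a,r). 4*a + r - 1) p) = p"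
    proof
      fix p assume p: "p \<in> {k'\<in>Kset. k' < k} \<times> {..<(4::nat)}"
      obtain a r where ar: "p = (a, r)" by (cases p)
      then have "a \<in> Kset" "r < 4" using p by auto
      then have "1 \<le> a" using K0 by (cases a) auto
      then have "4*a + r - 1 + 1 = 4*a + r" by simp
      then show "(\<lambda>y. ((y+1) div 4, (y+1) mod 4)) ((\<lambda>(a,r). 4*a + r - 1) p) = p"
        using ar \<open>r < 4\<close> by simp
    qed
    show "(\<lambda>y. ((y+1) div 4, (y+1) mod 4)) ` {y\<in>Dset. y < 4*k - 1} \<subseteq> {k'\<in>Kset. k' < k} \<times> {..<(4::nat)}"
    proof
      fix p assume "p \<in> (\<lambda>y. ((y+1) div 4, (y+1) mod 4)) ` {y\<in>Dset. y < 4*k - 1}"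
      then obtain y where y: "y \<in> Dset" "y < 4*k - 1" and p: "p = ((y+1) div 4, (y+1) mod 4)" by auto
      have "(y+1) div 4 \<in> Kset" using y D_iff by simp
      moreover have "(y+1) div 4 < k" using y(2) k1 by (simp add: div_less_iff_less_mult)
      ultimately show "p \<in> {k'\<in>Kset. k' < k} \<times> {..<(4::nat)}" using p by simp
    qed
    show "(\<lambda>(a,r). 4*a + r - 1) ` ({k'\<in>Kset. k' < k} \<times> {..<(4::nat)}) \<subseteq> {y\<in>Dset. y < 4*k - 1}"
    proof
      fix y assume "y \<in> (\<lambda>(a,r). 4*a + r - 1) ` ({k'\<in>Kset. k' < k} \<times> {..<(4::nat)})"
      then obtain a r where y: "y = 4*a + r - 1" and a: "a \<in> Kset" "a < k" and r: "r < 4" by auto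
      have "1 \<le> a" using a K0 by (cases a) auto
      then have "y + 1 = 4*a + r" using y by simp
      then have "(y+1) div 4 = a" using r by simp
      then have "y \<in> Dset" using a D_iff by simp
      moreover have "y < 4*k - 1" using y a r \<open>1 \<le> a\<close> by simp
      ultimately show "y \<in> {y\<in>Dset. y < 4*k - 1}" by simp
    qed
  qed
  then have "card {y\<in>Dset. y < 4*k - 1} = card ({k'\<in>Kset. k' < k} \<times> {..<(4::nat)})"
    by (rule bij_betw_same_card)
  then show ?thesis by (simp add: card_cartesian_product)
qed


lemma dseq_K: assumes k: "k \<in> Kset" shows "dseq (4 * card {k'\<in>Kset. k' < k}) = 4*k - 1"
proof -
  have k1: "1 \<le> k" using k K0 by (cases k) auto
  have d: "dseq n = enumerate Dset n" for n by (simp add: dseq_def Dset_def)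
  have "(4*k - 1 + 1) div 4 = k" using k1 by simp
  then have "4*k - 1 \<in> Dset" using k D_iff by simp
  moreover have "card {y\<in>Dset. y < 4*k - 1} = 4 * card {k'\<in>Kset. k' < k}" using D_count[OF k] by simp
  ultimately show ?thesis unfolding d by (rule enum_card[OF D_inf])
qed

lemma notK_iff: "k \<notin> Kset \<longleftrightarrow> (\<exists>i. k = 2 * sf i)"
proof
  assume "k \<notin> Kset"
  then have "even k" "inS (k div 2)" by (auto simp: Kset_def)
  then obtain i where "k div 2 = sf i" using inS_sf by blast
  then show "\<exists>i. k = 2 * sf i" using \<open>even k\<close> by (metis dvd_mult_div_cancel)
next
  assume "\<exists>i. k = 2 * sf i"
  then obtain i where "k = 2 * sf i" by blast
  then show "k \<notin> Kset" using sf_inS[of i] by (simp add: Kset_def)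
qed

lemma zK: assumes k: "k \<in> Kset" and c: "{i. 2*sf i < k} = {..<c}"
  shows "card {k'\<in>Kset. k' < k} + c = k" and "zseq (card {k'\<in>Kset. k' < k}) = int (c mod 2)"
proof -
  define n where "n = card {k'\<in>Kset. k' < k}"
  have "{k'. k' < k \<and> k' \<notin> Kset} = (\<lambda>i. 2 * sf i) ` {i. 2*sf i < k}"
    using notK_iff by auto
  moreover have "inj_on (\<lambda>i. 2 * sf i) {i. 2*sf i < k}"
  proof -
    have inj: "inj sf" using strict_mono_imp_inj_on[OF sf_mono] by simp
    show ?thesis unfolding inj_on_def using injD[OF inj] by auto
  qed
  ultimately have cc: "card {k'. k' < k \<and> k' \<notin> Kset} = c" using c by (simp add: card_image)
  have "{..<k} = {k'\<in>Kset. k' < k} \<union> {k'. k' < k \<and> k' \<notin> Kset}" by auto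
  then have "card {..<k} = card ({k'\<in>Kset. k' < k} \<union> {k'. k' < k \<and> k' \<notin> Kset})" by (rule arg_cong)
  moreover have "card ({k'\<in>Kset. k' < k} \<union> {k'. k' < k \<and> k' \<notin> Kset}) = card {k'\<in>Kset. k' < k} + card {k'. k' < k \<and> k' \<notin> Kset}"
    by (rule card_Un_disjoint) auto
  ultimately have nk: "n + c = k" using cc unfolding n_def by simp
  then show "card {k'\<in>Kset. k' < k} + c = k" unfolding n_def .
  have k1: "1 \<le> k" using k K0 by (cases k) auto
  have "dseq (4*n) = 4*k - 1" unfolding n_def by (rule dseq_K[OF k])
  then have "int (dseq (4*n)) + 1 = 4 * int k" using k1 by simp
  then have "zseq n = (int k - int n) mod 2" unfolding zseq_def by simp
  also have "\<dots> = int c mod 2"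
  proof -
    have "int k - int n = int c" using nk by linarith
    then show ?thesis by simp
  qed
  also have "\<dots> = int (c mod 2)" by (simp add: zmod_int)
  finally show "zseq (card {k'\<in>Kset. k' < k}) = int (c mod 2)" unfolding n_def .
qed

lemma downset: "\<exists>c. {i. 2*sf i < k} = {..<c}"
proof -
  have ex: "\<exists>i. \<not> 2*sf i < k" using sf_ge[of k] by (intro exI[of _ k]) simp
  define c where "c = (LEAST i. \<not> 2*sf i < k)"
  have "{i. 2*sf i < k} = {..<c}"
  proof
    show "{i. 2*sf i < k} \<subseteq> {..<c}"
    proof
      fix i assume i: "i \<in> {i. 2*sf i < k}"
      show "i \<in> {..<c}"
      proof (rule ccontr)
        assume "i \<notin> {..<c}"
        then have "c \<le> i" by simp
        then have "sf c \<le> sf i" using sf_mono by (simp add: strict_mono_less_eq)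
        moreover have "\<not> 2*sf c < k" unfolding c_def by (rule LeastI_ex[OF ex])
        ultimately show False using i by simp
      qed
    qed
    show "{..<c} \<subseteq> {i. 2*sf i < k}"
      using not_less_Least unfolding c_def by auto
  qed
  then show ?thesis by blast
qed

definition gfun :: "nat \<Rightarrow> nat" where "gfun i = 8 * sf i - 2 * i"

lemma Z1: "zseq (gfun i) = 1"
proof -
  define k where "k = 8 * sf i + 1"
  have kK: "k \<in> Kset" unfolding k_def Kset_def by simp
  have "{j. 2*sf j < k} = {..<2*i+1}"
  proof -
    have "2*sf j < k \<longleftrightarrow> sf j \<le> sf (2*i)" for j
    proof -
      have "sf (2*i) = 4 * sf i" using sf_2[of 0 i] by simp
      moreover have "2*sf j < 8 * sf i + 1 \<longleftrightarrow> sf j \<le> 4 * sf i" by (rule iffI; linarith)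
      ultimately show ?thesis unfolding k_def by simp
    qed
    moreover have "sf j \<le> sf (2*i) \<longleftrightarrow> j \<le> 2*i" for j using sf_mono by (rule strict_mono_less_eq)
    ultimately have "2*sf j < k \<longleftrightarrow> j < 2*i+1" for j by auto
    then show ?thesis by auto
  qed
  note z = zK[OF kK this]
  have "card {k'\<in>Kset. k' < k} = gfun i" using z(1) unfolding gfun_def k_def by simp
  then show ?thesis using z(2) by simp
qed

lemma Z0: assumes "\<And>i. m \<noteq> gfun i" shows "zseq m = 0"
proof -
  define k where "k = enumerate Kset m"
  have kK: "k \<in> Kset" unfolding k_def by (rule enumerate_in_set[OF K_inf])
  have km: "card {k'\<in>Kset. k' < k} = m" unfolding k_def by (rule card_less_enum[OF K_inf])
  obtain c where c: "{i. 2*sf i < k} = {..<c}" using downset by blast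
  note z = zK[OF kK c]
  show ?thesis
  proof (cases "even c")
    case True then show ?thesis using z(2) km by simp
  next
    case False
    then obtain i where ci: "c = 2*i+1" by (metis oddE)
    have "2*i \<in> {..<c}" "2*i+1 \<notin> {..<c}" using ci by auto
    then have "2*sf (2*i) < k" "\<not> 2*sf (2*i+1) < k" using c by blast+
    moreover have "sf (2*i) = 4*sf i" "sf (2*i+1) = 4*sf i + 1" using sf_2[of 0 i] sf_2[of 1 i] by simp_all
    ultimately have kr: "8*sf i < k" "k \<le> 8*sf i + 2" by simp_all
    have "k \<noteq> 8*sf i + 2"
    proof
      assume "k = 8*sf i + 2"
      then have "k = 2 * sf (2*i+1)" using sf_2[of 1 i] by simp
      then show False using kK notK_iff by blast
    qed
    then have "k = 8*sf i + 1" using kr by simp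
    then have "m = gfun i" using z(1) km ci unfolding gfun_def by simp
    then show ?thesis using assms by blast
  qed
qed


lemma pow4: "(4::nat)^p = (2^p)^2" by (metis power_mult power_mult_distrib mult.commute power2_eq_square numeral_Bit0 mult_2)
lemma pow2odd: "(2::nat)^(2*q+1) = 2*(2^q)^2" by (simp add: power_add power_mult mult.commute)

lemma nat_aux: "(a::nat) + 8 \<le> b \<Longrightarrow> c \<le> a \<Longrightarrow> a - c < b - (c + 2)" by presburger

lemma gfun_step: "gfun i < gfun (Suc i)"
proof -
  have "sf i < sf (Suc i)" by (rule sf_step)
  moreover have "i \<le> sf i" by (rule sf_ge)
  ultimately have h: "8*sf i + 8 \<le> 8*sf (Suc i)" "2*i \<le> 8*sf i" by simp_all
  have "8*sf i - 2*i < 8*sf (Suc i) - (2*i + 2)" by (rule nat_aux[OF h])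
  then show ?thesis unfolding gfun_def by simp
qed

lemma gfun_mono: "strict_mono gfun"
  using gfun_step by (simp add: strict_mono_Suc_iff)

lemma not_g: assumes pq: "p < q" shows "2^(2*q+1) * (4^(p+1) - 1) \<noteq> gfun i"
proof
  assume eq: "2^(2*q+1) * (4^(p+1) - 1) = gfun i"
  define A :: nat where "A = 2^p"
  define B :: nat where "B = 2^q"
  define P where "P = A*B"
  define Q where "Q = P^2"
  define R where "R = B^2"
  define M :: nat where "M = 2^(2*q+1) * (4^(p+1) - 1)"
  have A1: "1 \<le> A" unfolding A_def by simp
  have P1: "1 \<le> P" unfolding P_def A_def B_def by simp
  have i0: "2^(p+q) = P" unfolding P_def A_def B_def by (simp add: power_add)
  have s0: "sf P = Q" using sf_pow[of "p+q"] i0 pow4[of "p+q"] unfolding Q_def by simp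
  have s1: "3 * sf (P - 1) + 1 = Q" using sf_pow1[of "p+q"] i0 pow4[of "p+q"] unfolding Q_def by simp
  have "M = 2*R*(4*A^2 - 1)" unfolding M_def R_def B_def A_def
    using pow2odd[of q] pow4[of "p+1"] by (simp add: power_mult_distrib)
  then have fM: "M + 2*R = 8*Q"
  proof -
    assume m: "M = 2*R*(4*A^2 - 1)"
    have "2*R*(4*A^2 - 1) = 2*R*(4*A^2) - 2*R*1" by (rule diff_mult_distrib2)
    moreover have "2*R*(4*A^2) = 8*Q" unfolding R_def Q_def P_def by (simp add: power_mult_distrib)
    moreover have "2*R \<le> 2*R*(4*A^2)" using A1 by simp
    ultimately show ?thesis using m by linarith
  qed
  have fg0: "gfun P + 2*P = 8*Q" unfolding gfun_def s0
  proof -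
    have "P \<le> Q" unfolding Q_def using P1 by (simp add: power2_eq_square)
    then show "8 * Q - 2 * P + 2 * P = 8 * Q" by simp
  qed
  have PR: "P < R" unfolding P_def R_def A_def B_def using pq by (simp add: power2_eq_square)
  have RQ: "R \<le> Q" unfolding R_def Q_def P_def using A1 by (simp add: power_mult_distrib)
  have g1: "gfun (P - 1) \<le> 8 * sf (P - 1)" unfolding gfun_def by simp
  have lt: "gfun (P - 1) < M" and gt: "M < gfun P" using fM fg0 PR s1 g1 RQ by linarith+
  have Mi: "M = gfun i" using eq unfolding M_def .
  show False
  proof (cases "i < P")
    case True
    then have "i \<le> P - 1" by simp
    then have "gfun i \<le> gfun (P - 1)" using gfun_mono by (simp add: strict_mono_less_eq)
    then show False using lt Mi by simp
  next
    case False
    then have "gfun P \<le> gfun i" using gfun_mono by (simp add: strict_mono_less_eq)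
    then show False using gt Mi by simp
  qed
qed

lemma hit: "2^(2*p+1) * (4^(p+1) - 1) = gfun (2^(2*p))"
proof -
  define E :: nat where "E = 4^p"
  have a: "(2::nat)^(2*p+1) = 2*E" unfolding E_def by (simp add: power_add power_mult)
  have b: "(4::nat)^(p+1) = 4*E" unfolding E_def by simp
  have d: "(2::nat)^(2*p) = E" unfolding E_def by (simp add: power_mult)
  have c: "sf E = E^2" using sf_pow[of "2*p"] unfolding d unfolding E_def by (simp add: power_mult mult.commute)
  have "2*E*(4*E-1) = 2*E*(4*E) - 2*E*1" by (rule diff_mult_distrib2)
  then show ?thesis unfolding a b gfun_def c d by (simp add: power2_eq_square)
qed

theorem mainTheorem14:
  shows "\<not> automatic 2 zseq"
proof
  assume "automatic 2 zseq"
  then have fin: "finite (kernel 2 zseq)" by (simp add: automatic_def)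
  define f where "f p = (\<lambda>n. zseq (2^(2*p+1) * n + 0))" for p
  have sub: "range f \<subseteq> kernel 2 zseq"
  proof
    fix u assume "u \<in> range f"
    then obtain p where "u = f p" by blast
    then show "u \<in> kernel 2 zseq" unfolding kernel_def f_def
      by (intro CollectI exI[of _ "2*p+1"] exI[of _ 0]) simp
  qed
  have neq: "f p \<noteq> f q" if pq: "p < q" for p q
  proof
    assume e: "f p = f q"
    have "f p (4^(p+1) - 1) = 1" unfolding f_def using hit[of p] Z1 by simp
    moreover have "f q (4^(p+1) - 1) = 0" unfolding f_def using Z0 not_g[OF pq] by simp
    ultimately show False using e by simp
  qed
  have "inj f"
  proof (rule injI)
    fix p q assume "f p = f q"
    then show "p = q" using neq neq[of q p] by (metis linorder_neqE_nat)
  qed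
  then have "infinite (range f)" by (simp add: range_inj_infinite)
  then show False using fin sub finite_subset by blast
qed

end
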